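(* Let $\mathcal{E}:\mathcal{S}(\mathcal{H}_1)\otimes\mathcal{S}(\mathcal{H}_2)\to\mathcal{S}(\mathcal{H}_1)$ be any channel such that $\Delta\circ\mathcal{E}\circ\Delta=\Delta\circ\mathcal{E}$, where $\Delta(\rho)=\sum_x|x\rangle\langle x|\rho|x\rangle\langle x|$ is the dephasing map in the computational basis. Then for any state $\tau\in\mathcal{S}(\mathcal{H}_2)$, the channel $\mathcal{E}_\tau(\rho):=\mathcal{E}(\rho\otimes\tau)$ cannot implement any coherent unitary exactly.
   Context: A unitary is incoherent if it has the form $\sum_x e^{i\theta_x}|\pi(x)\rangle\langle x|$ for real $\theta_x$ and a permutation $\pi$; otherwise it is coherent. $\mathcal{S}(\mathcal{H})$ denotes the set of density operators on $\mathcal{H}$. *)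

theory Defs
  imports "Jordan_Normal_Form.Matrix"
begin

text \<open>The composite system H1 (x) H2 is indexed by i1 * n2 + i2 (Kronecker ordering).\<close>

definition dagger :: "complex mat \<Rightarrow> complex mat" where
  "dagger A = mat (dim_col A) (dim_row A) (\<lambda>(i,j). cnj (A $$ (j,i)))"

definition tr :: "complex mat \<Rightarrow> complex" where
  "tr A = (\<Sum>i<dim_row A. A $$ (i,i))"

definition psd :: "nat \<Rightarrow> complex mat \<Rightarrow> bool" where
  "psd n A \<longleftrightarrow> A \<in> carrier_mat n n \<and>
     (\<forall>v \<in> carrier_vec n. Im (scalar_prod (map_vec cnj v) (A *\<^sub>v v)) = 0 \<and> 0 \<le> Re (scalar_prod (map_vec cnj v) (A *\<^sub>v v)))"

definition density :: "nat \<Rightarrow> complex mat \<Rightarrow> bool" where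
  "density n \<rho> \<longleftrightarrow> psd n \<rho> \<and> tr \<rho> = 1"

definition kron :: "complex mat \<Rightarrow> complex mat \<Rightarrow> complex mat" where
  "kron A B = mat (dim_row A * dim_row B) (dim_col A * dim_col B)
     (\<lambda>(i,j). A $$ (i div dim_row B, j div dim_col B) * B $$ (i mod dim_row B, j mod dim_col B))"

definition dephase :: "nat \<Rightarrow> complex mat \<Rightarrow> complex mat" where
  "dephase n A = mat n n (\<lambda>(i,j). if i = j then A $$ (i,i) else 0)"

text \<open>(id_k (x) E)(X) for a map E from n x n to m x m matrices, ancilla of dimension k
  (ancilla index first).\<close>
definition id_tensor :: "nat \<Rightarrow> nat \<Rightarrow> nat \<Rightarrow> (complex mat \<Rightarrow> complex mat) \<Rightarrow> complex mat \<Rightarrow> complex mat" where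
  "id_tensor k n m E X = mat (k * m) (k * m)
     (\<lambda>(i,j). E (mat n n (\<lambda>(p,q). X $$ ((i div m) * n + p, (j div m) * n + q))) $$ (i mod m, j mod m))"

definition channel :: "nat \<Rightarrow> nat \<Rightarrow> (complex mat \<Rightarrow> complex mat) \<Rightarrow> bool" where
  "channel n m E \<longleftrightarrow>
     (\<forall>A \<in> carrier_mat n n. E A \<in> carrier_mat m m) \<and>
     (\<forall>A \<in> carrier_mat n n. \<forall>B \<in> carrier_mat n n. E (A + B) = E A + E B) \<and>
     (\<forall>A \<in> carrier_mat n n. \<forall>c. E (c \<cdot>\<^sub>m A) = c \<cdot>\<^sub>m E A) \<and>
     (\<forall>A \<in> carrier_mat n n. tr (E A) = tr A) \<and>
     (\<forall>k X. psd (k * n) X \<longrightarrow> psd (k * m) (id_tensor k n m E X))"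

definition unitary :: "nat \<Rightarrow> complex mat \<Rightarrow> bool" where
  "unitary n U \<longleftrightarrow> U \<in> carrier_mat n n \<and> U * dagger U = 1\<^sub>m n"

definition incoherent_unitary :: "nat \<Rightarrow> complex mat \<Rightarrow> bool" where
  "incoherent_unitary n U \<longleftrightarrow>
     (\<exists>(\<pi>::nat \<Rightarrow> nat) (\<theta>::nat \<Rightarrow> real). bij_betw \<pi> {..<n} {..<n} \<and>
        U = mat n n (\<lambda>(i,j). if i = \<pi> j then exp (\<i> * complex_of_real (\<theta> j)) else 0))"

definition coherent_unitary :: "nat \<Rightarrow> complex mat \<Rightarrow> bool" where
  "coherent_unitary n U \<longleftrightarrow> unitary n U \<and> \<not> incoherent_unitary n U"

end

theory Submission
  imports Defs
begin

lemma row_norm: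
  assumes "unitary n U" "y < n" "y' < n"
  shows "(\<Sum>k<n. U $$ (y,k) * cnj (U $$ (y',k))) = (if y = y' then 1 else 0)"
proof -
  have Uc: "U \<in> carrier_mat n n" using assms unfolding unitary_def by simp
  have "(U * dagger U) $$ (y,y') = (1\<^sub>m n) $$ (y,y')" using assms unfolding unitary_def by simp
  moreover have "(U * dagger U) $$ (y,y') = (\<Sum>k<n. U $$ (y,k) * cnj (U $$ (y',k)))"
    using assms(2,3) Uc unfolding dagger_def
    by (auto simp: scalar_prod_def row_def col_def atLeast0LessThan intro!: sum.cong)
  ultimately show ?thesis using assms by simp
qed

lemma incoh:
  assumes U: "unitary n U"
    and Z: "\<forall>y<n. \<forall>a<n. \<forall>b<n. a \<noteq> b \<longrightarrow> U $$ (y,a) = 0 \<or> U $$ (y,b) = 0"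
  shows "incoherent_unitary n U"
proof -
  have sum1: "(\<Sum>k<n. U $$ (y,k) * cnj (U $$ (y',k))) = U $$ (y,k0) * cnj (U $$ (y',k0))"
    if "y < n" "k0 < n" "\<forall>k<n. k \<noteq> k0 \<longrightarrow> U $$ (y,k) = 0" for y y' k0
    using that by (subst sum.remove[of _ k0]) (auto intro!: sum.neutral)
  have ex: "\<exists>k<n. U $$ (y,k) \<noteq> 0" if "y < n" for y
  proof (rule ccontr)
    assume "\<not> ?thesis"
    then have "(\<Sum>k<n. U $$ (y,k) * cnj (U $$ (y,k))) = 0" by simp
    with row_norm[OF U that that] show False by simp
  qed
  define f where "f y = (SOME k. k < n \<and> U $$ (y,k) \<noteq> 0)" for y
  have f: "f y < n" "U $$ (y, f y) \<noteq> 0" if "y < n" for y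
    using someI_ex[OF ex[OF that]] unfolding f_def by auto
  have fz: "U $$ (y,k) = 0" if "y < n" "k < n" "k \<noteq> f y" for y k
    using Z f[OF that(1)] that by blast
  have fn: "U $$ (y, f y) * cnj (U $$ (y, f y)) = 1" if "y < n" for y
    using row_norm[OF U that that] sum1[OF that f(1)[OF that], of y] fz that by auto
  have finj: "inj_on f {..<n}"
  proof (rule inj_onI)
    fix y y' assume yy: "y \<in> {..<n}" "y' \<in> {..<n}" "f y = f y'"
    show "y = y'"
    proof (rule ccontr)
      assume "y \<noteq> y'"
      then have "U $$ (y, f y) * cnj (U $$ (y', f y)) = 0"
        using row_norm[OF U, of y y'] sum1[of y "f y" y'] fz f yy by auto
      then show False using f yy by (metis lessThan_iff mult_eq_0_iff complex_cnj_zero_iff)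
    qed
  qed
  have fbij: "bij_betw f {..<n} {..<n}"
  proof -
    have "f ` {..<n} \<subseteq> {..<n}" using f(1) by auto
    then have "f ` {..<n} = {..<n}" using finj by (simp add: endo_inj_surj)
    then show ?thesis using finj by (simp add: bij_betw_def)
  qed
  define \<pi> where "\<pi> = the_inv_into {..<n} f"
  have pibij: "bij_betw \<pi> {..<n} {..<n}" unfolding \<pi>_def using fbij bij_betw_the_inv_into by blast
  have fpi: "f (\<pi> j) = j" if "j < n" for j
    unfolding \<pi>_def using fbij that by (simp add: bij_betw_def f_the_inv_into_f)
  have pif: "\<pi> (f i) = i" if "i < n" for i
    unfolding \<pi>_def using fbij that by (simp add: bij_betw_def the_inv_into_f_f)
  have polar: "\<exists>t. exp (\<i> * complex_of_real t) = z" if "z * cnj z = 1" for z :: complex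
  proof -
    have "norm z = 1" using that by (metis complex_norm_square norm_one of_real_eq_1_iff power2_eq_square norm_ge_zero power2_eq_1_iff abs_of_nonneg real_sqrt_abs real_sqrt_one norm_of_real)
    then obtain t where "z = Complex (cos t) (sin t)" by (rule complex_unimodular_polar)
    then show ?thesis by (metis cis.code cis_conv_exp)
  qed
  define \<theta> where "\<theta> j = (SOME t. exp (\<i> * complex_of_real t) = U $$ (\<pi> j, j))" for j
  have th: "exp (\<i> * complex_of_real (\<theta> j)) = U $$ (\<pi> j, j)" if "j < n" for j
  proof -
    have "\<pi> j < n" using pibij that by (auto simp: bij_betw_def)
    then have "U $$ (\<pi> j, j) * cnj (U $$ (\<pi> j, j)) = 1" using fn fpi that by metis
    then show ?thesis unfolding \<theta>_def using polar by (metis (mono_tags) someI_ex)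
  qed
  have "U = mat n n (\<lambda>(i,j). if i = \<pi> j then exp (\<i> * complex_of_real (\<theta> j)) else 0)"
  proof (rule eq_matI)
    fix i j assume ij: "i < dim_row (mat n n (\<lambda>(i,j). if i = \<pi> j then exp (\<i> * complex_of_real (\<theta> j)) else 0))"
      "j < dim_col (mat n n (\<lambda>(i,j). if i = \<pi> j then exp (\<i> * complex_of_real (\<theta> j)) else 0))"
    then have ij': "i < n" "j < n" by auto
    show "U $$ (i, j) = mat n n (\<lambda>(i,j). if i = \<pi> j then exp (\<i> * complex_of_real (\<theta> j)) else 0) $$ (i, j)"
    proof (cases "i = \<pi> j")
      case True then show ?thesis using ij' th by simp
    next
      case False
      then have "j \<noteq> f i" using pif ij' by metis
      then show ?thesis using False fz ij' by simp
    qed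
  qed (use U in \<open>auto simp: unitary_def\<close>)
  then show ?thesis unfolding incoherent_unitary_def using pibij by blast
qed
lemma sum_split: "(\<Sum>p<(n::nat)*m. f p) = (\<Sum>i<n. \<Sum>k<m. f (i*m+k) :: 'a::comm_monoid_add)"
proof (induction n)
  case 0 then show ?case by simp
next
  case (Suc n)
  have "{..<Suc n * m} = {..<n*m} \<union> {n*m..<n*m+m}" by auto
  then have "(\<Sum>p<Suc n*m. f p) = (\<Sum>p<n*m. f p) + (\<Sum>p\<in>{n*m..<n*m+m}. f p)"
    by (simp add: sum.union_disjoint ivl_disj_int)
  also have "(\<Sum>p\<in>{n*m..<n*m+m}. f p) = (\<Sum>k<m. f (n*m+k))"
    using sum.shift_bounds_nat_ivl[of f 0 "n*m" m]
    by (simp add: atLeast0LessThan add.commute)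
  finally show ?case using Suc by simp
qed

lemma qf:
  assumes "A \<in> carrier_mat N N" "v \<in> carrier_vec N"
  shows "scalar_prod (map_vec cnj v) (A *\<^sub>v v) = (\<Sum>p<N. \<Sum>q<N. cnj (v$p) * A$$(p,q) * v$q)"
  using assms by (auto simp: scalar_prod_def atLeast0LessThan sum_distrib_left mult.assoc intro!: sum.cong)

definition pure :: "nat \<Rightarrow> (nat \<Rightarrow> complex) \<Rightarrow> complex mat" where
  "pure n \<psi> = mat n n (\<lambda>(i,j). \<psi> i * cnj (\<psi> j))"

lemma cnj_mult_self: "Im (cnj z * z) = 0 \<and> 0 \<le> Re (cnj z * z)"
  by (simp add: mult.commute)

lemma pure_carrier: "pure n \<psi> \<in> carrier_mat n n" by (simp add: pure_def)

lemma pure_density: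
  assumes "(\<Sum>i<n. \<psi> i * cnj (\<psi> i)) = 1"
  shows "density n (pure n \<psi>)"
  unfolding density_def psd_def
proof (intro conjI ballI)
  show "pure n \<psi> \<in> carrier_mat n n" by (rule pure_carrier)
  show "tr (pure n \<psi>) = 1" using assms by (simp add: tr_def pure_def)
  fix v :: "complex vec" assume v: "v \<in> carrier_vec n"
  define w where "w = (\<Sum>q<n. cnj (\<psi> q) * v$q)"
  have "scalar_prod (map_vec cnj v) (pure n \<psi> *\<^sub>v v) = (\<Sum>p<n. \<Sum>q<n. cnj (v$p) * (pure n \<psi>)$$(p,q) * v$q)"
    by (rule qf[OF pure_carrier v])
  also have "\<dots> = (\<Sum>p<n. \<Sum>q<n. (cnj (v$p) * \<psi> p) * (cnj (\<psi> q) * v$q))"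
    by (simp add: pure_def mult_ac)
  also have "\<dots> = (\<Sum>p<n. cnj (v$p) * \<psi> p) * w"
    by (simp add: w_def sum_product)
  also have "(\<Sum>p<n. cnj (v$p) * \<psi> p) = cnj w"
    by (simp add: w_def mult.commute)
  finally have eq: "scalar_prod (map_vec cnj v) (pure n \<psi> *\<^sub>v v) = cnj w * w" .
  show "Im (scalar_prod (map_vec cnj v) (pure n \<psi> *\<^sub>v v)) = 0" using eq cnj_mult_self by simp
  show "0 \<le> Re (scalar_prod (map_vec cnj v) (pure n \<psi> *\<^sub>v v))" using eq cnj_mult_self by simp
qed

lemma kron_carrier: "A \<in> carrier_mat n n \<Longrightarrow> B \<in> carrier_mat m m \<Longrightarrow> kron A B \<in> carrier_mat (n*m) (n*m)"
  by (simp add: kron_def)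

lemma idx_bound: "i < n \<Longrightarrow> k < m \<Longrightarrow> i*m+k < (n::nat)*m"
proof -
  assume "i < n" "k < m"
  then have "i*m+k < i*m + m" "Suc i * m \<le> n*m" using mult_le_mono1[of "Suc i" n m] by auto
  then show ?thesis by simp
qed

lemma kron_idx: "A \<in> carrier_mat n n \<Longrightarrow> B \<in> carrier_mat m m \<Longrightarrow> i < n \<Longrightarrow> j < n \<Longrightarrow> k < m \<Longrightarrow> l < m \<Longrightarrow>
  kron A B $$ (i*m+k, j*m+l) = A $$ (i,j) * B $$ (k,l)"
proof -
  assume a: "A \<in> carrier_mat n n" "B \<in> carrier_mat m m" "i < n" "j < n" "k < m" "l < m"
  have "i*m+k < n*m" "j*m+l < n*m"
    using a idx_bound by auto
  then show ?thesis using a by (simp add: kron_def)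
qed

lemma kron_pure_density:
  assumes psi: "(\<Sum>i<n. \<psi> i * cnj (\<psi> i)) = 1" and tau: "density m \<tau>"
  shows "density (n*m) (kron (pure n \<psi>) \<tau>)"
proof -
  have tc: "\<tau> \<in> carrier_mat m m" using tau by (simp add: density_def psd_def)
  have pc: "pure n \<psi> \<in> carrier_mat n n" by (rule pure_carrier)
  have kc: "kron (pure n \<psi>) \<tau> \<in> carrier_mat (n*m) (n*m)" by (rule kron_carrier[OF pc tc])
  have ki: "kron (pure n \<psi>) \<tau> $$ (i*m+k, j*m+l) = \<psi> i * cnj (\<psi> j) * \<tau> $$ (k,l)"
    if "i < n" "j < n" "k < m" "l < m" for i j k l
    using kron_idx[OF pc tc that] that by (simp add: pure_def)
  have "tr (kron (pure n \<psi>) \<tau>) = (\<Sum>p<n*m. kron (pure n \<psi>) \<tau> $$ (p,p))"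
    using kc by (simp add: tr_def)
  also have "\<dots> = (\<Sum>i<n. \<Sum>k<m. \<psi> i * cnj (\<psi> i) * \<tau> $$ (k,k))"
    by (simp add: sum_split ki)
  also have "\<dots> = (\<Sum>i<n. \<psi> i * cnj (\<psi> i)) * (\<Sum>k<m. \<tau> $$ (k,k))"
    by (simp add: sum_product)
  also have "\<dots> = 1" using psi tau tc by (simp add: density_def tr_def)
  finally have trk: "tr (kron (pure n \<psi>) \<tau>) = 1" .
  have qpos: "Im (scalar_prod (map_vec cnj v) (kron (pure n \<psi>) \<tau> *\<^sub>v v)) = 0 \<and>
     0 \<le> Re (scalar_prod (map_vec cnj v) (kron (pure n \<psi>) \<tau> *\<^sub>v v))"
    if v: "v \<in> carrier_vec (n*m)" for v
  proof -
    define w where "w = vec m (\<lambda>l. \<Sum>j<n. cnj (\<psi> j) * v$(j*m+l))"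
    have wc: "w \<in> carrier_vec m" by (simp add: w_def)
    define T where "T i k j l = (\<psi> i * cnj (v$(i*m+k))) * \<tau>$$(k,l) * (cnj (\<psi> j) * v$(j*m+l))" for i k j l
    have "scalar_prod (map_vec cnj v) (kron (pure n \<psi>) \<tau> *\<^sub>v v)
        = (\<Sum>p<n*m. \<Sum>q<n*m. cnj (v$p) * kron (pure n \<psi>) \<tau> $$ (p,q) * v$q)"
      by (rule qf[OF kc v])
    also have "\<dots> = (\<Sum>i<n. \<Sum>k<m. \<Sum>j<n. \<Sum>l<m. T i k j l)"
      apply (simp only: sum_split)
      apply (simp add: ki)
      apply (simp add: T_def mult_ac)
      done
    also have "\<dots> = (\<Sum>k<m. \<Sum>i<n. \<Sum>j<n. \<Sum>l<m. T i k j l)"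
      by (rule sum.swap)
    also have "\<dots> = (\<Sum>k<m. \<Sum>i<n. \<Sum>l<m. \<Sum>j<n. T i k j l)"
      by (rule sum.cong[OF refl], rule sum.cong[OF refl], rule sum.swap)
    also have "\<dots> = (\<Sum>k<m. \<Sum>l<m. \<Sum>i<n. \<Sum>j<n. T i k j l)"
      by (rule sum.cong[OF refl], rule sum.swap)
    also have "\<dots> = (\<Sum>k<m. \<Sum>l<m. cnj (w$k) * \<tau>$$(k,l) * w$l)"
    proof (intro sum.cong refl)
      fix k l assume kl: "k \<in> {..<m}" "l \<in> {..<m}"
      have "cnj (w$k) * \<tau>$$(k,l) * w$l = (\<Sum>i<n. \<psi> i * cnj (v$(i*m+k))) * \<tau>$$(k,l) * (\<Sum>j<n. cnj (\<psi> j) * v$(j*m+l))"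
        using kl by (simp add: w_def mult.commute)
      also have "\<dots> = (\<Sum>i<n. \<Sum>j<n. T i k j l)"
        by (simp add: T_def sum_distrib_left sum_distrib_right, rule sum.swap)
      finally show "(\<Sum>i<n. \<Sum>j<n. T i k j l) = cnj (w$k) * \<tau>$$(k,l) * w$l" by simp
    qed
    also have "\<dots> = scalar_prod (map_vec cnj w) (\<tau> *\<^sub>v w)"
      by (rule qf[OF tc wc, symmetric])
    finally have eq: "scalar_prod (map_vec cnj v) (kron (pure n \<psi>) \<tau> *\<^sub>v v) = scalar_prod (map_vec cnj w) (\<tau> *\<^sub>v w)" .
    show ?thesis unfolding eq using tau wc by (simp add: density_def psd_def)
  qed
  show ?thesis unfolding density_def psd_def using kc trk qpos by blast
qed
lemma key_alg:
  fixes u v :: complex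
  assumes "(u+v)*cnj(u+v) = (u-v)*cnj(u-v)" "(u+\<i>*v)*cnj(u+\<i>*v) = (u-\<i>*v)*cnj(u-\<i>*v)"
  shows "u*cnj v = 0"
proof -
  have "2*(u*cnj v + v*cnj u) = 0" using assms(1) by (simp add: algebra_simps)
  then have 1: "u*cnj v + v*cnj u = 0" by (metis mult_eq_0_iff zero_neq_numeral)
  have "2*\<i>*(v*cnj u - u*cnj v) = 0" using assms(2) by (simp add: algebra_simps)
  then have 2: "v*cnj u - u*cnj v = 0" by (metis mult_eq_0_iff zero_neq_numeral complex_i_not_zero)
  have "u*cnj v = ((u*cnj v + v*cnj u) - (v*cnj u - u*cnj v))/2" by (simp add: field_simps)
  then show ?thesis using 1 2 by simp
qed
lemma conj_diag:
  assumes U: "U \<in> carrier_mat n n" and y: "y < n"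
  shows "(U * pure n \<psi> * dagger U) $$ (y,y) = (\<Sum>j<n. U$$(y,j) * \<psi> j) * cnj (\<Sum>k<n. U$$(y,k) * \<psi> k)"
proof -
  have "(U * pure n \<psi> * dagger U) $$ (y,y) = (\<Sum>k<n. (\<Sum>j<n. U$$(y,j) * \<psi> j) * cnj (\<psi> k) * cnj (U$$(y,k)))"
    using U y by (simp add: pure_def dagger_def scalar_prod_def atLeast0LessThan sum_distrib_right sum_distrib_left mult_ac)
  also have "\<dots> = (\<Sum>j<n. U$$(y,j) * \<psi> j) * cnj (\<Sum>k<n. U$$(y,k) * \<psi> k)"
    by (simp add: sum_distrib_left mult_ac)
  finally show ?thesis .
qed

lemma dephase_kron_eq:
  assumes "\<forall>i<n. \<psi> i * cnj (\<psi> i) = \<phi> i * cnj (\<phi> i)" "\<tau> \<in> carrier_mat m m"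
  shows "dephase (n*m) (kron (pure n \<psi>) \<tau>) = dephase (n*m) (kron (pure n \<phi>) \<tau>)"
proof (rule eq_matI)
  fix i j assume "i < dim_row (dephase (n*m) (kron (pure n \<phi>) \<tau>))" "j < dim_col (dephase (n*m) (kron (pure n \<phi>) \<tau>))"
  then have ij: "i < n*m" "j < n*m" by (auto simp: dephase_def)
  then have d: "i div m < n" by (simp add: less_mult_imp_div_less)
  show "dephase (n*m) (kron (pure n \<psi>) \<tau>) $$ (i,j) = dephase (n*m) (kron (pure n \<phi>) \<tau>) $$ (i,j)"
  proof (cases "i = j")
    case True
    then show ?thesis using ij assms d by (simp add: dephase_def kron_def pure_def)
  qed (use ij in \<open>simp add: dephase_def\<close>)
qed (auto simp: dephase_def)

lemma dephase_diag: "y < n \<Longrightarrow> dephase n A $$ (y,y) = A $$ (y,y)"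
  by (simp add: dephase_def)

theorem lemma5:
  fixes n1 n2 :: nat and E :: "complex mat \<Rightarrow> complex mat" and \<tau> U :: "complex mat"
  assumes "channel (n1 * n2) n1 E"
    and "\<forall>\<rho>. density (n1 * n2) \<rho> \<longrightarrow>
           dephase n1 (E (dephase (n1 * n2) \<rho>)) = dephase n1 (E \<rho>)"
    and "density n2 \<tau>"
    and "coherent_unitary n1 U"
  shows "\<not> (\<forall>\<rho>. density n1 \<rho> \<longrightarrow> E (kron \<rho> \<tau>) = U * \<rho> * dagger U)"
proof
  assume H: "\<forall>\<rho>. density n1 \<rho> \<longrightarrow> E (kron \<rho> \<tau>) = U * \<rho> * dagger U"
  have Uu: "unitary n1 U" and nI: "\<not> incoherent_unitary n1 U"
    using assms(4) by (auto simp: coherent_unitary_def)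
  have Uc: "U \<in> carrier_mat n1 n1" using Uu by (simp add: unitary_def)
  have tc: "\<tau> \<in> carrier_mat n2 n2" using assms(3) by (simp add: density_def psd_def)
  define s where "s = complex_of_real (1 / sqrt 2)"
  have ss: "s * cnj s = 1/2"
    unfolding s_def by (simp flip: of_real_mult)
  have Z: "\<forall>y<n1. \<forall>a<n1. \<forall>b<n1. a \<noteq> b \<longrightarrow> U$$(y,a) = 0 \<or> U$$(y,b) = 0"
  proof (intro allI impI)
    fix y a b assume y: "y < n1" and a: "a < n1" and b: "b < n1" and ab: "a \<noteq> b"
    define \<psi> where "\<psi> c j = (if j = a then s else 0) + (if j = b then s*c else 0)" for c :: complex and j
    have norm: "(\<Sum>j<n1. \<psi> c j * cnj (\<psi> c j)) = 1" if c: "c * cnj c = 1" for c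
    proof -
      have "\<psi> c j * cnj (\<psi> c j) = (if j = a then 1/2 else 0) + (if j = b then 1/2 else 0)" for j
      proof -
        have "s * c * cnj (s * c) = (s * cnj s) * (c * cnj c)" by (simp add: mult_ac)
        then show ?thesis using ab ss c by (auto simp: \<psi>_def)
      qed
      then show ?thesis using a b by (simp add: sum.distrib)
    qed
    have md: "\<forall>j<n1. \<psi> c j * cnj (\<psi> c j) = \<psi> (-c) j * cnj (\<psi> (-c) j)" for c
      using ab by (simp add: \<psi>_def)
    have row: "(\<Sum>j<n1. U$$(y,j) * \<psi> c j) = s * (U$$(y,a) + c * U$$(y,b))" for c
    proof -
      have "U$$(y,j) * \<psi> c j = (if j = a then U$$(y,a) * s else 0) + (if j = b then U$$(y,b) * (s * c) else 0)" for j
        by (simp add: \<psi>_def distrib_left)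
      then show ?thesis using a b by (simp add: sum.distrib algebra_simps)
    qed
    have D: "dephase n1 (U * pure n1 (\<psi> c) * dagger U) = dephase n1 (U * pure n1 (\<psi> (-c)) * dagger U)"
      if c: "c * cnj c = 1" for c
    proof -
      have c2: "(-c) * cnj (-c) = 1" using c by simp
      have d1: "density n1 (pure n1 (\<psi> c))" by (rule pure_density[OF norm[OF c]])
      have d2: "density n1 (pure n1 (\<psi> (-c)))" by (rule pure_density[OF norm[OF c2]])
      have k1: "density (n1*n2) (kron (pure n1 (\<psi> c)) \<tau>)" by (rule kron_pure_density[OF norm[OF c] assms(3)])
      have k2: "density (n1*n2) (kron (pure n1 (\<psi> (-c))) \<tau>)" by (rule kron_pure_density[OF norm[OF c2] assms(3)])
      have "dephase n1 (U * pure n1 (\<psi> c) * dagger U) = dephase n1 (E (kron (pure n1 (\<psi> c)) \<tau>))"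
        using H d1 by simp
      also have "\<dots> = dephase n1 (E (dephase (n1*n2) (kron (pure n1 (\<psi> c)) \<tau>)))"
        using assms(2) k1 by simp
      also have "\<dots> = dephase n1 (E (dephase (n1*n2) (kron (pure n1 (\<psi> (-c))) \<tau>)))"
        using dephase_kron_eq[OF md tc] by simp
      also have "\<dots> = dephase n1 (E (kron (pure n1 (\<psi> (-c))) \<tau>))"
        using assms(2) k2 by simp
      also have "\<dots> = dephase n1 (U * pure n1 (\<psi> (-c)) * dagger U)"
        using H d2 by simp
      finally show ?thesis .
    qed
    define u where "u = U$$(y,a)"
    define v where "v = U$$(y,b)"
    have EQ: "(u + c*v) * cnj (u + c*v) = (u - c*v) * cnj (u - c*v)" if c: "c * cnj c = 1" for c
    proof -
      have "dephase n1 (U * pure n1 (\<psi> c) * dagger U) $$ (y,y) = dephase n1 (U * pure n1 (\<psi> (-c)) * dagger U) $$ (y,y)"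
        using D[OF c] by simp
      then have "(s * (u + c*v)) * cnj (s * (u + c*v)) = (s * (u + (-c)*v)) * cnj (s * (u + (-c)*v))"
        using y Uc by (simp add: dephase_diag conj_diag row u_def v_def)
      moreover have sw: "(s * w) * cnj (s * w) = (1/2) * (w * cnj w)" for w
      proof -
        have "(s * w) * cnj (s * w) = (s * cnj s) * (w * cnj w)" by (simp add: mult_ac)
        then show ?thesis by (simp only: ss)
      qed
      ultimately have "(1/2) * ((u + c*v) * cnj (u + c*v)) = (1/2) * ((u + (-c)*v) * cnj (u + (-c)*v))"
        by (simp only: sw)
      then have "(u + c*v) * cnj (u + c*v) = (u + (-c)*v) * cnj (u + (-c)*v)" by simp
      then show ?thesis by simp
    qed
    have "u * cnj v = 0"
      by (rule key_alg) (use EQ[of 1] EQ[of \<i>] in simp_all)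
    then show "U$$(y,a) = 0 \<or> U$$(y,b) = 0" by (simp add: u_def v_def)
  qed
  show False using incoh[OF Uu Z] nI by simp
qed

end
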